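(* Let $P$ and $Q$ be finite posets and let $f : P \to Q$ be a $\chi$-distinguished map. Then for every function $h : Q \to \mathbb{Z}$, \[ \int_{Q} h \, d\chi = \int_{P} (f^* h) \, d\chi , \] where $f^*h = h \circ f$.
   Context: For a finite poset $P$, the zeta function is the $P \times P$ matrix with $\zeta(x,y)=1$ if $x \le y$ and $0$ otherwise; it is invertible, and the Euler characteristic is $\chi(P) = \sum_{x,y} \zeta^{-1}(x,y)$ ($\chi(\emptyset)=0$). A filter is an upward-closed subset; $\delta_S$ is the indicator function of $S$. Every $g : P \to \mathbb{Z}$ can be written as $g = \sum_i a_i \delta_{S_i}$ with $a_i \in \mathbb{Z}$ and $S_i$ filters of $P$; the Euler calculus is $\int_P g\, d\chi = \sum_i a_i \chi(S_i)$, independent of the representation. An order-preserving map $f : P \to Q$ is $\chi$-distinguished if $\chi(f^{-1}(Q_{\ge x})) = 1$ for every $x \in Q$, where $Q_{\ge x} = \{y \in Q \mid y \ge x\}$ (with $f^{-1}(Q_{\ge x})$ given the order induced from $P$). *)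

theory Defs
  imports Main
begin

definition finite_poset :: "'a set \<Rightarrow> ('a \<Rightarrow> 'a \<Rightarrow> bool) \<Rightarrow> bool" where
  "finite_poset P le \<longleftrightarrow> finite P
     \<and> (\<forall>x\<in>P. le x x)
     \<and> (\<forall>x\<in>P. \<forall>y\<in>P. le x y \<and> le y x \<longrightarrow> x = y)
     \<and> (\<forall>x\<in>P. \<forall>y\<in>P. \<forall>z\<in>P. le x y \<and> le y z \<longrightarrow> le x z)"

definition zeta :: "'a set \<Rightarrow> ('a \<Rightarrow> 'a \<Rightarrow> bool) \<Rightarrow> 'a \<Rightarrow> 'a \<Rightarrow> int" where
  "zeta P le x y = (if x \<in> P \<and> y \<in> P \<and> le x y then 1 else 0)"

definition zeta_inv :: "'a set \<Rightarrow> ('a \<Rightarrow> 'a \<Rightarrow> bool) \<Rightarrow> 'a \<Rightarrow> 'a \<Rightarrow> int" where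
  "zeta_inv P le = (THE m.
      (\<forall>x\<in>P. \<forall>y\<in>P. (\<Sum>z\<in>P. zeta P le x z * m z y) = (if x = y then 1 else 0))
    \<and> (\<forall>x\<in>P. \<forall>y\<in>P. (\<Sum>z\<in>P. m x z * zeta P le z y) = (if x = y then 1 else 0))
    \<and> (\<forall>x y. x \<notin> P \<or> y \<notin> P \<longrightarrow> m x y = 0))"

definition euler_char :: "'a set \<Rightarrow> ('a \<Rightarrow> 'a \<Rightarrow> bool) \<Rightarrow> int" where
  "euler_char S le = (\<Sum>x\<in>S. \<Sum>y\<in>S. zeta_inv S le x y)"

definition is_filter :: "'a set \<Rightarrow> ('a \<Rightarrow> 'a \<Rightarrow> bool) \<Rightarrow> 'a set \<Rightarrow> bool" where
  "is_filter P le S \<longleftrightarrow> S \<subseteq> P \<and> (\<forall>x\<in>S. \<forall>y\<in>P. le x y \<longrightarrow> y \<in> S)"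

definition filter_rep :: "'a set \<Rightarrow> ('a \<Rightarrow> 'a \<Rightarrow> bool) \<Rightarrow> ('a \<Rightarrow> int) \<Rightarrow> (int \<times> 'a set) list \<Rightarrow> bool" where
  "filter_rep P le g rep \<longleftrightarrow>
     (\<forall>(a, S)\<in>set rep. is_filter P le S)
   \<and> (\<forall>x\<in>P. g x = (\<Sum>(a, S)\<leftarrow>rep. a * (if x \<in> S then 1 else 0)))"

text \<open>Euler calculus: the value sum a_i chi(S_i) of some filter representation
  (well-defined, i.e. independent of the representation).\<close>
definition euler_integral :: "'a set \<Rightarrow> ('a \<Rightarrow> 'a \<Rightarrow> bool) \<Rightarrow> ('a \<Rightarrow> int) \<Rightarrow> int" where
  "euler_integral P le g = (THE c. \<exists>rep. filter_rep P le g rep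
       \<and> c = (\<Sum>(a, S)\<leftarrow>rep. a * euler_char S le))"

definition order_preserving :: "'a set \<Rightarrow> ('a \<Rightarrow> 'a \<Rightarrow> bool) \<Rightarrow> 'b set \<Rightarrow> ('b \<Rightarrow> 'b \<Rightarrow> bool) \<Rightarrow> ('a \<Rightarrow> 'b) \<Rightarrow> bool" where
  "order_preserving P leP Q leQ f \<longleftrightarrow> f ` P \<subseteq> Q \<and> (\<forall>x\<in>P. \<forall>y\<in>P. leP x y \<longrightarrow> leQ (f x) (f y))"

definition chi_distinguished :: "'a set \<Rightarrow> ('a \<Rightarrow> 'a \<Rightarrow> bool) \<Rightarrow> 'b set \<Rightarrow> ('b \<Rightarrow> 'b \<Rightarrow> bool) \<Rightarrow> ('a \<Rightarrow> 'b) \<Rightarrow> bool" where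
  "chi_distinguished P leP Q leQ f \<longleftrightarrow> order_preserving P leP Q leQ f
     \<and> (\<forall>x\<in>Q. euler_char {p \<in> P. leQ x (f p)} leP = 1)"

end

theory Submission
  imports Defs
begin

lemma fp_subset: "finite_poset P le \<Longrightarrow> S \<subseteq> P \<Longrightarrow> finite_poset S le"
  unfolding finite_poset_def by (meson finite_subset subsetD)

definition is_inv :: "'a set \<Rightarrow> ('a \<Rightarrow> 'a \<Rightarrow> bool) \<Rightarrow> ('a \<Rightarrow> 'a \<Rightarrow> int) \<Rightarrow> bool" where
  "is_inv P le m \<longleftrightarrow> (\<forall>x\<in>P. \<forall>y\<in>P. (\<Sum>z\<in>P. zeta P le x z * m z y) = (if x = y then 1 else 0))
    \<and> (\<forall>x\<in>P. \<forall>y\<in>P. (\<Sum>z\<in>P. m x z * zeta P le z y) = (if x = y then 1 else 0))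
    \<and> (\<forall>x y. x \<notin> P \<or> y \<notin> P \<longrightarrow> m x y = 0)"

lemma inv_unique:
  assumes inv: "is_inv S le m" and fin: "finite S"
    and r: "\<forall>x\<in>S. \<forall>y\<in>S. (\<Sum>z\<in>S. zeta S le x z * m' z y) = (if x = y then 1 else 0)"
    and o: "\<forall>x y. x \<notin> S \<or> y \<notin> S \<longrightarrow> m' x y = 0"
  shows "m' = m"
proof -
  have "m x y = m' x y" if xy: "x \<in> S" "y \<in> S" for x y
  proof -
    have "m x y = (\<Sum>z\<in>S. m x z * (if z = y then 1 else 0))"
      using xy fin by (simp add: if_distrib cong: if_cong)
    also have "\<dots> = (\<Sum>z\<in>S. m x z * (\<Sum>w\<in>S. zeta S le z w * m' w y))"
      using r xy by (intro sum.cong) auto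
    also have "\<dots> = (\<Sum>w\<in>S. (\<Sum>z\<in>S. m x z * zeta S le z w) * m' w y)"
      by (simp only: sum_distrib_left sum_distrib_right mult.assoc) (rule sum.swap)
    also have "\<dots> = (\<Sum>w\<in>S. (if x = w then 1 else 0) * m' w y)"
      using inv xy unfolding is_inv_def by (intro sum.cong) auto
    also have "\<dots> = (\<Sum>w\<in>S. if x = w then m' w y else 0)" by (intro sum.cong) auto
    also have "\<dots> = m' x y" using xy fin by simp
    finally show ?thesis .
  qed
  moreover have "m x y = m' x y" if "x \<notin> S \<or> y \<notin> S" for x y
    using that o inv unfolding is_inv_def by auto
  ultimately show ?thesis by (intro ext) metis
qed

lemma exists_max:
  assumes "finite_poset A le" "B \<subseteq> A" "B \<noteq> {}"
  shows "\<exists>t\<in>B. \<forall>b\<in>B. le t b \<longrightarrow> b = t"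
proof -
  have fin: "finite B" using assms unfolding finite_poset_def by (meson finite_subset)
  show ?thesis using fin assms(3,2)
  proof (induction B rule: finite_ne_induct)
    case (singleton x) then show ?case by auto
  next
    case (insert x F)
    then obtain t where t: "t \<in> F" "\<forall>b\<in>F. le t b \<longrightarrow> b = t" by auto
    have xA: "x \<in> A" and FA: "F \<subseteq> A" using insert by auto
    show ?case
    proof (cases "le t x")
      case True
      have "\<forall>b\<in>insert x F. le x b \<longrightarrow> b = x"
      proof (intro ballI impI)
        fix b assume b: "b \<in> insert x F" "le x b"
        show "b = x"
        proof (cases "b = x")
          case False
          then have bF: "b \<in> F" using b by auto
          have "le t b" using True b(2) assms(1) xA FA bF t(1) unfolding finite_poset_def by blast
          then have "b = t" using t bF by auto
          then show ?thesis using True b(2) assms(1) xA FA t(1) unfolding finite_poset_def by blast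
        qed
      qed
      then show ?thesis by auto
    next
      case False
      then show ?thesis using t by auto
    qed
  qed
qed

lemma inv_exists:
  assumes pB: "finite_poset B le"
  shows "\<exists>m. is_inv B le m \<and> (\<forall>x y. m x y \<noteq> 0 \<longrightarrow> le x y)"
proof -
  have fin: "finite B" using pB unfolding finite_poset_def by auto
  show ?thesis using fin
  proof (induction rule: finite_remove_induct)
    case empty
    show ?case by (rule exI[of _ "\<lambda>_ _. 0"]) (simp add: is_inv_def)
  next
    case (remove A)
    have pA: "finite_poset A le" using fp_subset[OF pB remove(3)] .
    obtain t where tA: "t \<in> A" and tmax: "\<forall>b\<in>A. le t b \<longrightarrow> b = t"
      using exists_max[OF pB remove(3) remove(2)] by blast
    define A' where "A' = A - {t}"
    obtain m' where im': "is_inv A' le m'" and tm': "\<forall>x y. m' x y \<noteq> 0 \<longrightarrow> le x y"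
      using remove(4)[OF tA] unfolding A'_def by blast
    have finA': "finite A'" using remove(1) unfolding A'_def by auto
    have Aeq: "A = insert t A'" and tA': "t \<notin> A'" using tA unfolding A'_def by auto
    have refl: "\<And>x. x \<in> A \<Longrightarrow> le x x" and trans: "\<And>x y z. x \<in> A \<Longrightarrow> y \<in> A \<Longrightarrow> z \<in> A \<Longrightarrow> le x y \<Longrightarrow> le y z \<Longrightarrow> le x z"
      using pA unfolding finite_poset_def by blast+
    have zz: "\<And>x y. x \<in> A' \<Longrightarrow> y \<in> A' \<Longrightarrow> zeta A' le x y = zeta A le x y"
      unfolding zeta_def A'_def by auto
    have zt: "\<And>w. w \<in> A \<Longrightarrow> zeta A le t w = (if w = t then 1 else 0)"
      using tmax tA refl unfolding zeta_def by auto
    have sumA: "\<And>F. (\<Sum>z\<in>A. F z) = F t + (\<Sum>z\<in>A'. F z)"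
      using Aeq tA' finA' by simp
    have R': "\<And>x y. x \<in> A' \<Longrightarrow> y \<in> A' \<Longrightarrow> (\<Sum>z\<in>A'. zeta A le x z * m' z y) = (if x = y then 1 else 0)"
    proof -
      fix x y assume "x \<in> A'" "y \<in> A'"
      then show "(\<Sum>z\<in>A'. zeta A le x z * m' z y) = (if x = y then 1 else 0)"
        using im' zz unfolding is_inv_def by (metis (no_types, lifting) sum.cong)
    qed
    have L': "\<And>x y. x \<in> A' \<Longrightarrow> y \<in> A' \<Longrightarrow> (\<Sum>z\<in>A'. m' x z * zeta A le z y) = (if x = y then 1 else 0)"
    proof -
      fix x y assume "x \<in> A'" "y \<in> A'"
      then show "(\<Sum>z\<in>A'. m' x z * zeta A le z y) = (if x = y then 1 else 0)"
        using im' zz unfolding is_inv_def by (metis (no_types, lifting) sum.cong)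
    qed
    have out': "\<And>x y. x \<notin> A' \<or> y \<notin> A' \<Longrightarrow> m' x y = 0" using im' unfolding is_inv_def by blast
    define c where "c x = (\<Sum>z\<in>A'. m' x z * zeta A le z t)" for x
    define m where "m x y = (if x \<in> A' \<and> y \<in> A' then m' x y else if x = t \<and> y = t then 1
        else if x \<in> A' \<and> y = t then - c x else 0)" for x y
    have mA': "\<And>x y. y \<in> A' \<Longrightarrow> m x y = m' x y" unfolding m_def using out' tA' by auto
    have mt: "\<And>y. y \<in> A' \<Longrightarrow> m t y = 0" unfolding m_def using tA' by auto
    have mtt: "m t t = 1" unfolding m_def using tA' by auto
    have mxt: "\<And>x. x \<in> A' \<Longrightarrow> m x t = - c x" unfolding m_def using tA' by auto
    have zA't: "\<And>z. z \<in> A' \<Longrightarrow> zeta A le t z = 0" using zt tA' Aeq by auto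
    have R: "(\<Sum>z\<in>A. zeta A le x z * m z y) = (if x = y then 1 else 0)" if xy: "x \<in> A" "y \<in> A" for x y
    proof (cases "y = t")
      case False
      then have yA': "y \<in> A'" using xy Aeq by auto
      have "(\<Sum>z\<in>A. zeta A le x z * m z y) = (\<Sum>z\<in>A'. zeta A le x z * m' z y)"
        by (simp only: sumA) (simp add: mA'[OF yA'] out' tA')
      also have "\<dots> = (if x = y then 1 else 0)"
      proof (cases "x = t")
        case True
        then show ?thesis using zA't False by simp
      next
        case False
        then show ?thesis using R' xy yA' Aeq by auto
      qed
      finally show ?thesis .
    next
      case True
      show ?thesis
      proof (cases "x = t")
        case True
        then show ?thesis using zA't mtt \<open>y = t\<close> zt tA by (simp only: sumA) simp
      next
        case False
        then have xA': "x \<in> A'" using xy Aeq by auto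
        have "(\<Sum>z\<in>A'. zeta A le x z * m z t) = - (\<Sum>z\<in>A'. zeta A le x z * c z)"
          using mxt by (simp add: sum_negf[symmetric])
        also have "(\<Sum>z\<in>A'. zeta A le x z * c z) = (\<Sum>w\<in>A'. (\<Sum>z\<in>A'. zeta A le x z * m' z w) * zeta A le w t)"
          unfolding c_def by (simp only: sum_distrib_left sum_distrib_right mult.assoc) (rule sum.swap)
        also have "\<dots> = (\<Sum>w\<in>A'. (if x = w then 1 else 0) * zeta A le w t)"
          using R' xA' by (intro sum.cong) auto
        also have "\<dots> = (\<Sum>w\<in>A'. if x = w then zeta A le w t else 0)" by (intro sum.cong) auto
        also have "\<dots> = zeta A le x t" using xA' finA' by simp
        finally have "(\<Sum>z\<in>A'. zeta A le x z * m z t) = - zeta A le x t" .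
        then show ?thesis using mtt True False by (simp only: sumA) simp
      qed
    qed
    have L: "(\<Sum>z\<in>A. m x z * zeta A le z y) = (if x = y then 1 else 0)" if xy: "x \<in> A" "y \<in> A" for x y
    proof (cases "x = t")
      case True
      have "(\<Sum>z\<in>A'. m x z * zeta A le z y) = 0" using True mt by simp
      then show ?thesis using True mtt zt xy by (simp only: sumA) simp
    next
      case False
      then have xA': "x \<in> A'" using xy Aeq by auto
      show ?thesis
      proof (cases "y = t")
        case True
        then show ?thesis using mxt[OF xA'] mA' L' xA' False zt tA unfolding c_def by (simp only: sumA) simp
      next
        case yt: False
        then have yA': "y \<in> A'" using xy Aeq by auto
        have "(\<Sum>z\<in>A'. m x z * zeta A le z y) = (\<Sum>z\<in>A'. m' x z * zeta A le z y)"
          using mA' by simp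
        then show ?thesis using zA't[OF yA'] L'[OF xA' yA'] by (simp only: sumA)
      qed
    qed
    have O: "m x y = 0" if "x \<notin> A \<or> y \<notin> A" for x y
      using that Aeq unfolding m_def by auto
    have T: "le x y" if nz: "m x y \<noteq> 0" for x y
    proof -
      consider "x \<in> A'" "y \<in> A'" | "x = t" "y = t" | "x \<in> A'" "y = t" "c x \<noteq> 0"
        using nz unfolding m_def by (auto split: if_splits)
      then show ?thesis
      proof cases
        case 1 then show ?thesis using nz tm' unfolding m_def by auto
      next
        case 2 then show ?thesis using refl tA by auto
      next
        case 3
        then obtain z where z: "z \<in> A'" "m' x z * zeta A le z t \<noteq> 0"
          unfolding c_def by (meson sum.neutral)
        then have "le x z" "le z t" using tm' unfolding zeta_def by (auto split: if_splits)
        then show ?thesis using trans 3 z(1) tA Aeq by blast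
      qed
    qed
    show ?case using R L O T unfolding is_inv_def by blast
  qed
qed

lemma zinv_eq:
  assumes "finite_poset S le" "is_inv S le m"
  shows "zeta_inv S le = m"
proof -
  have fin: "finite S" using assms(1) unfolding finite_poset_def by auto
  show ?thesis unfolding zeta_inv_def
  proof (rule the_equality)
    show "(\<forall>x\<in>S. \<forall>y\<in>S. (\<Sum>z\<in>S. zeta S le x z * m z y) = (if x = y then 1 else 0))
    \<and> (\<forall>x\<in>S. \<forall>y\<in>S. (\<Sum>z\<in>S. m x z * zeta S le z y) = (if x = y then 1 else 0))
    \<and> (\<forall>x y. x \<notin> S \<or> y \<notin> S \<longrightarrow> m x y = 0)" using assms(2) unfolding is_inv_def .
  next
    fix m' assume h: "(\<forall>x\<in>S. \<forall>y\<in>S. (\<Sum>z\<in>S. zeta S le x z * m' z y) = (if x = y then 1 else 0))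
    \<and> (\<forall>x\<in>S. \<forall>y\<in>S. (\<Sum>z\<in>S. m' x z * zeta S le z y) = (if x = y then 1 else 0))
    \<and> (\<forall>x y. x \<notin> S \<or> y \<notin> S \<longrightarrow> m' x y = 0)"
    show "m' = m" using inv_unique[OF assms(2) fin] h by blast
  qed
qed

lemma zinv:
  assumes "finite_poset S le"
  shows "is_inv S le (zeta_inv S le)" "\<And>x y. zeta_inv S le x y \<noteq> 0 \<Longrightarrow> le x y"
proof -
  obtain m where "is_inv S le m" "\<forall>x y. m x y \<noteq> 0 \<longrightarrow> le x y" using inv_exists[OF assms] by blast
  then show "is_inv S le (zeta_inv S le)" "\<And>x y. zeta_inv S le x y \<noteq> 0 \<Longrightarrow> le x y"
    using zinv_eq[OF assms] by auto
qed

definition wt :: "'a set \<Rightarrow> ('a \<Rightarrow> 'a \<Rightarrow> bool) \<Rightarrow> 'a \<Rightarrow> int" where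
  "wt P le x = (\<Sum>y\<in>P. zeta_inv P le x y)"

lemma filter_chi:
  assumes pP: "finite_poset P le" and fS: "is_filter P le S"
  shows "euler_char S le = (\<Sum>x\<in>P. (if x \<in> S then 1 else 0) * wt P le x)"
proof -
  have SP: "S \<subseteq> P" using fS unfolding is_filter_def by auto
  have up: "\<And>x y. x \<in> S \<Longrightarrow> y \<in> P \<Longrightarrow> le x y \<Longrightarrow> y \<in> S" using fS unfolding is_filter_def by auto
  have pS: "finite_poset S le" using fp_subset[OF pP SP] .
  have finP: "finite P" using pP unfolding finite_poset_def by auto
  have finS: "finite S" using pS unfolding finite_poset_def by auto
  let ?mu = "zeta_inv P le"
  define r where "r x y = (if x \<in> S \<and> y \<in> S then ?mu x y else 0)" for x y
  have iP: "is_inv P le ?mu" and tP: "\<And>x y. ?mu x y \<noteq> 0 \<Longrightarrow> le x y" using zinv[OF pP] by auto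
  have req: "r = zeta_inv S le"
  proof (rule inv_unique[OF zinv(1)[OF pS] finS])
    show "\<forall>x y. x \<notin> S \<or> y \<notin> S \<longrightarrow> r x y = 0" unfolding r_def by auto
    show "\<forall>x\<in>S. \<forall>y\<in>S. (\<Sum>z\<in>S. zeta S le x z * r z y) = (if x = y then 1 else 0)"
    proof (intro ballI)
      fix x y assume xy: "x \<in> S" "y \<in> S"
      have "(\<Sum>z\<in>S. zeta S le x z * r z y) = (\<Sum>z\<in>S. zeta P le x z * ?mu z y)"
        using xy SP unfolding r_def zeta_def by (intro sum.cong) auto
      also have "\<dots> = (\<Sum>z\<in>P. zeta P le x z * ?mu z y)"
        using up xy finP SP unfolding zeta_def by (intro sum.mono_neutral_left) auto
      also have "\<dots> = (if x = y then 1 else 0)" using iP xy SP unfolding is_inv_def by blast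
      finally show "(\<Sum>z\<in>S. zeta S le x z * r z y) = (if x = y then 1 else 0)" .
    qed
  qed
  then have rS: "zeta_inv S le x y = ?mu x y" if "x \<in> S" "y \<in> S" for x y
  proof -
    have "zeta_inv S le x y = r x y" using req by simp
    then show ?thesis using that unfolding r_def by simp
  qed
  then have "euler_char S le = (\<Sum>x\<in>S. \<Sum>y\<in>S. ?mu x y)"
    unfolding euler_char_def by (intro sum.cong) auto
  also have "\<dots> = (\<Sum>x\<in>S. wt P le x)"
    unfolding wt_def
  proof (rule sum.cong[OF refl])
    fix x assume x: "x \<in> S"
    show "(\<Sum>y\<in>S. ?mu x y) = (\<Sum>y\<in>P. ?mu x y)"
      using x up tP finP SP by (intro sum.mono_neutral_left) auto
  qed
  also have "\<dots> = (\<Sum>x\<in>P. if x \<in> S then wt P le x else 0)"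
    using sum.inter_restrict[OF finP, of "wt P le" S] SP by (simp add: Int_absorb1)
  also have "\<dots> = (\<Sum>x\<in>P. (if x \<in> S then 1 else 0) * wt P le x)" by (intro sum.cong) auto
  finally show ?thesis .
qed

lemma rep_sum:
  assumes pP: "finite_poset P le" and "\<forall>(a, S)\<in>set rep. is_filter P le S"
  shows "(\<Sum>(a, S)\<leftarrow>rep. a * euler_char S le)
       = (\<Sum>x\<in>P. (\<Sum>(a, S)\<leftarrow>rep. a * (if x \<in> S then 1 else 0)) * wt P le x)"
  using assms(2)
proof (induction rep)
  case Nil then show ?case by simp
next
  case (Cons p rep)
  obtain a S where p: "p = (a, S)" by fastforce
  have fS: "is_filter P le S" using Cons.prems p by auto
  have IH: "(\<Sum>(a, S)\<leftarrow>rep. a * euler_char S le)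
       = (\<Sum>x\<in>P. (\<Sum>(a, S)\<leftarrow>rep. a * (if x \<in> S then 1 else 0)) * wt P le x)"
    using Cons by auto
  show ?case using IH filter_chi[OF pP fS] p
    by (simp add: distrib_right sum.distrib sum_distrib_left mult.assoc)
qed

lemma sum_list_concat_map:
  "sum_list (map F (concat (map G xs))) = sum_list (map (\<lambda>x. sum_list (map F (G x))) xs)"
  by (induction xs) auto

lemma rep_exists:
  assumes pP: "finite_poset P le"
  shows "\<exists>rep. filter_rep P le g rep"
proof -
  have finP: "finite P" using pP unfolding finite_poset_def by auto
  have refl: "\<And>x. x \<in> P \<Longrightarrow> le x x"
    and anti: "\<And>x y. x \<in> P \<Longrightarrow> y \<in> P \<Longrightarrow> le x y \<Longrightarrow> le y x \<Longrightarrow> x = y"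
    and trans: "\<And>x y z. x \<in> P \<Longrightarrow> y \<in> P \<Longrightarrow> z \<in> P \<Longrightarrow> le x y \<Longrightarrow> le y z \<Longrightarrow> le x z"
    using pP unfolding finite_poset_def by blast+
  obtain xs where xs: "set xs = P" "distinct xs" using finite_distinct_list[OF finP] by blast
  define U where "U x = {y \<in> P. le x y}" for x
  define rep where "rep = concat (map (\<lambda>x. [(g x, U x), (- g x, U x - {x})]) xs)"
  have filt: "\<forall>(a, S)\<in>set rep. is_filter P le S"
  proof -
    have "is_filter P le (U x)" if "x \<in> P" for x
      unfolding is_filter_def U_def using trans that by blast
    moreover have "is_filter P le (U x - {x})" if "x \<in> P" for x
      unfolding is_filter_def U_def using trans anti that by blast
    ultimately show ?thesis unfolding rep_def using xs by auto
  qed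
  have val: "g y = (\<Sum>(a, S)\<leftarrow>rep. a * (if y \<in> S then 1 else 0))" if y: "y \<in> P" for y
  proof -
    have "(\<Sum>(a, S)\<leftarrow>rep. a * (if y \<in> S then 1 else 0))
        = (\<Sum>x\<leftarrow>xs. g x * (if y \<in> U x then 1 else 0) + - g x * (if y \<in> U x - {x} then 1 else 0))"
      unfolding rep_def sum_list_concat_map by simp
    also have "\<dots> = (\<Sum>x\<leftarrow>xs. if x = y then g y else 0)"
    proof (rule arg_cong[where f = sum_list], rule map_cong[OF HOL.refl])
      fix x assume "x \<in> set xs"
      then show "g x * (if y \<in> U x then 1 else 0) + - g x * (if y \<in> U x - {x} then 1 else 0) = (if x = y then g y else 0)"
        using y refl unfolding U_def by auto
    qed
    also have "\<dots> = (\<Sum>x\<in>P. if x = y then g y else 0)"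
      using sum_list_distinct_conv_sum_set[OF xs(2)] xs(1) by metis
    also have "\<dots> = g y" using finP y by simp
    finally show ?thesis by simp
  qed
  show ?thesis using filt val unfolding filter_rep_def by blast
qed

lemma integral_eq:
  assumes pP: "finite_poset P le"
  shows "euler_integral P le g = (\<Sum>x\<in>P. g x * wt P le x)"
  unfolding euler_integral_def
proof (rule the_equality)
  obtain rep where r: "filter_rep P le g rep" using rep_exists[OF pP] by blast
  have "(\<Sum>(a, S)\<leftarrow>rep. a * euler_char S le) = (\<Sum>x\<in>P. g x * wt P le x)"
    using rep_sum[OF pP] r unfolding filter_rep_def by (simp cong: sum.cong)
  then show "\<exists>rep. filter_rep P le g rep \<and> (\<Sum>x\<in>P. g x * wt P le x) = (\<Sum>(a, S)\<leftarrow>rep. a * euler_char S le)"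
    using r by metis
next
  fix c assume "\<exists>rep. filter_rep P le g rep \<and> c = (\<Sum>(a, S)\<leftarrow>rep. a * euler_char S le)"
  then obtain rep where r: "filter_rep P le g rep" and c: "c = (\<Sum>(a, S)\<leftarrow>rep. a * euler_char S le)" by blast
  show "c = (\<Sum>x\<in>P. g x * wt P le x)"
    using rep_sum[OF pP] r c unfolding filter_rep_def by (simp cong: sum.cong)
qed

lemma wt_zeta_sum:
  assumes pQ: "finite_poset Q le" and q: "q \<in> Q"
  shows "(\<Sum>x\<in>Q. zeta Q le q x * wt Q le x) = 1"
proof -
  have finQ: "finite Q" using pQ unfolding finite_poset_def by auto
  have iQ: "is_inv Q le (zeta_inv Q le)" using zinv[OF pQ] by auto
  have "(\<Sum>x\<in>Q. zeta Q le q x * wt Q le x) = (\<Sum>y\<in>Q. \<Sum>x\<in>Q. zeta Q le q x * zeta_inv Q le x y)"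
    unfolding wt_def by (simp only: sum_distrib_left) (rule sum.swap)
  also have "\<dots> = (\<Sum>y\<in>Q. if q = y then 1 else 0)"
    using iQ q unfolding is_inv_def by (intro sum.cong) auto
  also have "\<dots> = 1" using finQ q by simp
  finally show ?thesis .
qed

lemma zeta_kernel:
  assumes pQ: "finite_poset Q le" and r: "r \<in> Q"
    and k: "\<forall>q\<in>Q. (\<Sum>x\<in>Q. zeta Q le q x * u x) = 0"
  shows "u r = 0"
proof -
  have finQ: "finite Q" using pQ unfolding finite_poset_def by auto
  have iQ: "is_inv Q le (zeta_inv Q le)" using zinv[OF pQ] by auto
  have "u r = (\<Sum>x\<in>Q. if r = x then u x else 0)" using finQ r by simp
  also have "\<dots> = (\<Sum>x\<in>Q. (\<Sum>q\<in>Q. zeta_inv Q le r q * zeta Q le q x) * u x)"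
    using iQ r unfolding is_inv_def by (intro sum.cong) auto
  also have "\<dots> = (\<Sum>q\<in>Q. zeta_inv Q le r q * (\<Sum>x\<in>Q. zeta Q le q x * u x))"
    by (simp only: sum_distrib_left sum_distrib_right mult.assoc) (rule sum.swap)
  also have "\<dots> = 0" using k by simp
  finally show ?thesis .
qed

theorem theorem4p10:
  fixes P :: "'a set" and leP :: "'a \<Rightarrow> 'a \<Rightarrow> bool"
    and Q :: "'b set" and leQ :: "'b \<Rightarrow> 'b \<Rightarrow> bool"
    and f :: "'a \<Rightarrow> 'b" and h :: "'b \<Rightarrow> int"
  assumes "finite_poset P leP" and "finite_poset Q leQ"
    and "chi_distinguished P leP Q leQ f"
  shows "euler_integral Q leQ h = euler_integral P leP (h \<circ> f)"
proof -
  note pP = assms(1) and pQ = assms(2)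
  have finP: "finite P" using pP unfolding finite_poset_def by auto
  have finQ: "finite Q" using pQ unfolding finite_poset_def by auto
  have fPQ: "f ` P \<subseteq> Q" and mono: "\<forall>x\<in>P. \<forall>y\<in>P. leP x y \<longrightarrow> leQ (f x) (f y)"
    and chi1: "\<forall>x\<in>Q. euler_char {p \<in> P. leQ x (f p)} leP = 1"
    using assms(3) unfolding chi_distinguished_def order_preserving_def by auto
  have transQ: "\<And>x y z. x \<in> Q \<Longrightarrow> y \<in> Q \<Longrightarrow> z \<in> Q \<Longrightarrow> leQ x y \<Longrightarrow> leQ y z \<Longrightarrow> leQ x z"
    using pQ unfolding finite_poset_def by blast
  define W where "W q = (\<Sum>p\<in>{p \<in> P. f p = q}. wt P leP p)" for q
  have grp: "\<And>F. (\<Sum>q\<in>Q. \<Sum>p\<in>{p \<in> P. f p = q}. F p) = (\<Sum>p\<in>P. F p)"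
    using sum.group[OF finP finQ fPQ] by blast
  have kW: "(\<Sum>x\<in>Q. zeta Q leQ q x * W x) = 1" if q: "q \<in> Q" for q
  proof -
    define F where "F = {p \<in> P. leQ q (f p)}"
    have fF: "is_filter P leP F"
      unfolding is_filter_def F_def using mono transQ q fPQ by blast
    have "(\<Sum>x\<in>Q. zeta Q leQ q x * W x) = (\<Sum>x\<in>Q. \<Sum>p\<in>{p \<in> P. f p = x}. zeta Q leQ q (f p) * wt P leP p)"
      unfolding W_def sum_distrib_left by (intro sum.cong) auto
    also have "\<dots> = (\<Sum>p\<in>P. zeta Q leQ q (f p) * wt P leP p)" by (rule grp)
    also have "\<dots> = (\<Sum>p\<in>P. (if p \<in> F then 1 else 0) * wt P leP p)"
      using q fPQ unfolding zeta_def F_def by (intro sum.cong) auto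
    also have "\<dots> = euler_char F leP" using filter_chi[OF pP fF] by simp
    also have "\<dots> = 1" using chi1 q unfolding F_def by auto
    finally show ?thesis .
  qed
  have WQ: "wt Q leQ q = W q" if q: "q \<in> Q" for q
  proof -
    have "(\<lambda>x. wt Q leQ x - W x) q = 0"
    proof (rule zeta_kernel[OF pQ q], intro ballI)
      fix r assume r: "r \<in> Q"
      show "(\<Sum>x\<in>Q. zeta Q leQ r x * (wt Q leQ x - W x)) = 0"
        using wt_zeta_sum[OF pQ r] kW[OF r] by (simp add: right_diff_distrib sum_subtractf)
    qed
    then show ?thesis by simp
  qed
  have "euler_integral P leP (h \<circ> f) = (\<Sum>p\<in>P. h (f p) * wt P leP p)"
    using integral_eq[OF pP] by simp
  also have "\<dots> = (\<Sum>q\<in>Q. \<Sum>p\<in>{p \<in> P. f p = q}. h (f p) * wt P leP p)" by (rule grp[symmetric])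
  also have "\<dots> = (\<Sum>q\<in>Q. h q * W q)"
    unfolding W_def sum_distrib_left by (intro sum.cong) auto
  also have "\<dots> = (\<Sum>q\<in>Q. h q * wt Q leQ q)" using WQ by simp
  also have "\<dots> = euler_integral Q leQ h" using integral_eq[OF pQ] by simp
  finally show ?thesis by simp
qed

end
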